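(* Let $n\ge 2$ be an integer, let $a_1,\dots,a_n>0$ with $\sum_{k=1}^n a_k=1$, and let $c_k,d_k,\beta_k\in\mathbb{R}$ ($k=1,\dots,n$) with $\max_{1\le k\le n}|d_k|<1$. Put $\alpha_1=0$, $\alpha_k=\sum_{j=1}^{k-1}a_j$ for $k=2,\dots,n+1$, and $S_k(x)=a_kx+\alpha_k$. Let $f\in C[0;1]$ be a continuous function satisfying $f=G(f)$, where $$[G(f)](t)=\sum_{k=1}^n\bigl(d_k f(S_k^{-1}(t))+c_k t+\beta_k\bigr)\chi_{I_k}(t),\qquad I_1=[0;\alpha_2],\ I_k=(\alpha_k;\alpha_{k+1}]\ (k\ge2).$$ Suppose $|d_i|/a_i=1$ for all $i=1,\dots,n$. Then for every $\alpha\in(0;1)$ there is a constant $C\ge0$ such that $|f(x)-f(y)|\le C|x-y|^\alpha$ for all $x,y\in[0;1]$.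
   Context: Here $\chi_I$ is the indicator function of the interval $I$. A continuous function $f$ with $G(f)=f$ is called an (affine) self-similar function with self-similarity parameters $\{a_k\},\{c_k\},\{d_k\},\{\beta_k\}$. *)

theory Defs
  imports "HOL-Analysis.Analysis"
begin

text \<open>Parameters are indexed by k = 1..n as in the paper.\<close>

definition ss_alpha :: "(nat \<Rightarrow> real) \<Rightarrow> nat \<Rightarrow> real" where
  "ss_alpha a k = (\<Sum>j=1..<k. a j)"

definition ss_S :: "(nat \<Rightarrow> real) \<Rightarrow> nat \<Rightarrow> real \<Rightarrow> real" where
  "ss_S a k x = a k * x + ss_alpha a k"

definition ss_I :: "(nat \<Rightarrow> real) \<Rightarrow> nat \<Rightarrow> real set" where
  "ss_I a k = (if k = 1 then {0..ss_alpha a 2} else {ss_alpha a k<..ss_alpha a (k+1)})"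

definition ss_G :: "nat \<Rightarrow> (nat \<Rightarrow> real) \<Rightarrow> (nat \<Rightarrow> real) \<Rightarrow> (nat \<Rightarrow> real) \<Rightarrow> (nat \<Rightarrow> real)
     \<Rightarrow> (real \<Rightarrow> real) \<Rightarrow> real \<Rightarrow> real" where
  "ss_G n a c d \<beta> f t =
     (\<Sum>k=1..n. (d k * f (inv_into UNIV (ss_S a k) t) + c k * t + \<beta> k) * indicator (ss_I a k) t)"

end

theory Submission
  imports Defs
begin

lemma keyineq:
  fixes a am \<alpha> u M C D :: real
  assumes "0 < a" "a \<le> am" "am < 1" "0<\<alpha>" "\<alpha><1" "0 \<le> u" "u \<le> 1" "0 \<le> M"
    "M / (1 - am powr (1-\<alpha>)) \<le> C" "D \<le> a * (C * (u/a) powr \<alpha>) + M * u"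
  shows "D \<le> C * u powr \<alpha>"
proof -
  have r1: "am powr (1-\<alpha>) < 1" using assms powr01_less_one[of am "1-\<alpha>"] by simp
  hence r0: "0 < 1 - am powr (1-\<alpha>)" by simp
  have C0: "0 \<le> C" using assms(8,9) r0 by (meson divide_nonneg_pos order_trans)
  have MC: "M \<le> C * (1 - am powr (1-\<alpha>))" using assms(9) r0 by (simp add: divide_le_eq mult.commute)
  have e1: "a * (u/a) powr \<alpha> = a powr (1-\<alpha>) * u powr \<alpha>"
    using assms(1,6) by (simp add: powr_divide powr_diff field_simps)
  have e2: "a powr (1-\<alpha>) \<le> am powr (1-\<alpha>)" using assms by (simp add: powr_mono2)
  have e3: "u \<le> u powr \<alpha>"
  proof (cases "u = 0")
    case False
    then show ?thesis using assms powr_mono'[of \<alpha> 1 u] by (simp add: powr_one)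
  qed simp
  have up: "0 \<le> u powr \<alpha>" by simp
  have "D \<le> C * (a powr (1-\<alpha>) * u powr \<alpha>) + M * u" using assms(10) e1 by (simp add: algebra_simps)
  also have "\<dots> \<le> C * (am powr (1-\<alpha>) * u powr \<alpha>) + M * u powr \<alpha>"
    by (intro add_mono mult_left_mono mult_right_mono e2 e3 up C0 assms(8))
  also have "\<dots> \<le> C * (am powr (1-\<alpha>) * u powr \<alpha>) + C * (1 - am powr (1-\<alpha>)) * u powr \<alpha>"
    by (intro add_mono mult_right_mono MC up) auto
  also have "\<dots> = C * u powr \<alpha>" by (simp add: algebra_simps)
  finally show ?thesis .
qed

locale ssf =
  fixes n :: nat and a c d \<beta> :: "nat \<Rightarrow> real" and f :: "real \<Rightarrow> real"
  assumes n2: "n \<ge> 2" and apos: "\<forall>k\<in>{1..n}. a k > 0"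
    and asum: "(\<Sum>k=1..n. a k) = 1"
    and cont: "continuous_on {0..1} f"
    and fixp: "\<forall>t\<in>{0..1}. f t = ss_G n a c d \<beta> f t"
    and dabs: "\<forall>i\<in>{1..n}. \<bar>d i\<bar> / a i = 1"
begin

lemma al1: "ss_alpha a 1 = 0" by (simp add: ss_alpha_def)

lemma alSuc: "1 \<le> k \<Longrightarrow> ss_alpha a (Suc k) = ss_alpha a k + a k"
  unfolding ss_alpha_def by simp

lemma aln: "ss_alpha a (n+1) = 1"
  unfolding ss_alpha_def using asum by (simp add: atLeastLessThanSuc_atLeastAtMost)

lemma al_mono: assumes "1 \<le> i" "i \<le> j" "j \<le> n+1" shows "ss_alpha a i \<le> ss_alpha a j"
  using assms(2)
proof (induction j rule: dec_induct)
  case base then show ?case by simp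
next
  case (step m)
  then have "a m > 0" using apos assms by auto
  then show ?case using step alSuc[of m] assms by simp
qed

lemma al_strict: "1 \<le> i \<Longrightarrow> i < j \<Longrightarrow> j \<le> n+1 \<Longrightarrow> ss_alpha a i < ss_alpha a j"
proof -
  assume h: "1 \<le> i" "i < j" "j \<le> n+1"
  then obtain m where m: "j = Suc m" "i \<le> m" by (cases j) auto
  have "ss_alpha a i \<le> ss_alpha a m" using al_mono h m by simp
  moreover have "a m > 0" using apos h m by auto
  ultimately show ?thesis using alSuc[of m] h m by simp
qed

lemma al_range: "1 \<le> k \<Longrightarrow> k \<le> n+1 \<Longrightarrow> 0 \<le> ss_alpha a k \<and> ss_alpha a k \<le> 1"
  using al_mono[of 1 k] al_mono[of k "n+1"] al1 aln by simp

lemma dk: "k \<in> {1..n} \<Longrightarrow> \<bar>d k\<bar> = a k"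
  using dabs apos by (metis divide_eq_1_iff)

lemma inI: assumes "k\<in>{1..n}" "j\<in>{1..n}" "ss_alpha a k < t" "t \<le> ss_alpha a (k+1)"
  shows "(t \<in> ss_I a j) = (j = k)"
proof (cases "j = k")
  case True
  then show ?thesis using assms al1 by (auto simp: ss_I_def numeral_2_eq_2)
next
  case False
  show ?thesis
  proof (cases "j < k")
    case True
    then have "ss_alpha a (j+1) \<le> ss_alpha a k" using assms al_mono[of "j+1" k] by simp
    moreover have "j = 1 \<Longrightarrow> ss_I a j = {0..ss_alpha a (j+1)}" by (simp add: ss_I_def numeral_2_eq_2)
    moreover have "j \<noteq> 1 \<Longrightarrow> ss_I a j = {ss_alpha a j<..ss_alpha a (j+1)}" by (simp add: ss_I_def)
    ultimately show ?thesis using assms False by (cases "j = 1") auto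
  next
    case False2: False
    then have "ss_alpha a (k+1) \<le> ss_alpha a j" using assms al_mono[of "k+1" j] False by simp
    moreover have "j \<noteq> 1" using False False2 assms by auto
    ultimately show ?thesis using assms False by (auto simp: ss_I_def numeral_2_eq_2)
  qed
qed

lemma invS: "k \<in> {1..n} \<Longrightarrow> inv_into UNIV (ss_S a k) (ss_S a k x) = x"
proof -
  assume k: "k \<in> {1..n}"
  have "a k > 0" using apos k by auto
  hence "a k \<noteq> 0" by simp
  then have "inj (ss_S a k)" by (intro injI) (auto simp: ss_S_def)
  then show ?thesis by (simp add: inv_into_f_f)
qed

lemma ident_pos: assumes k: "k\<in>{1..n}" and x: "0 < x" "x \<le> 1"
  shows "f (ss_S a k x) = d k * f x + c k * ss_S a k x + \<beta> k"
proof -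
  define t where "t = ss_S a k x"
  have ak: "a k > 0" using apos k by auto
  have t1: "ss_alpha a k < t" using ak x by (simp add: t_def ss_S_def)
  have t2: "t \<le> ss_alpha a (k+1)" using ak x alSuc[of k] k by (simp add: t_def ss_S_def)
  have t01: "t \<in> {0..1}" using t1 t2 al_range[of k] al_range[of "k+1"] k by auto
  have "f t = ss_G n a c d \<beta> f t" using fixp t01 by auto
  also have "\<dots> = (\<Sum>j=1..n. if j = k then d k * f (inv_into UNIV (ss_S a k) t) + c k * t + \<beta> k else 0)"
    unfolding ss_G_def by (rule sum.cong) (use inI[OF k _ t1 t2] in auto)
  also have "\<dots> = d k * f x + c k * t + \<beta> k" using k invS[OF k] by (simp add: t_def)
  finally show ?thesis by (simp add: t_def)
qed

lemma ident: assumes k: "k\<in>{1..n}" and x: "0 \<le> x" "x \<le> 1"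
  shows "f (ss_S a k x) = d k * f x + c k * ss_S a k x + \<beta> k"
proof -
  define g where "g = (\<lambda>x. f (ss_S a k x) - (d k * f x + c k * ss_S a k x + \<beta> k))"
  have ak: "a k > 0" using apos k by auto
  have img: "ss_S a k ` {0..1} \<subseteq> {0..1}"
  proof
    fix t assume "t \<in> ss_S a k ` {0..1}"
    then obtain y where y: "0 \<le> y" "y \<le> 1" "t = ss_S a k y" by auto
    have "ss_alpha a k \<le> t" using y ak by (simp add: ss_S_def)
    moreover have "t \<le> ss_alpha a (k+1)" using ak y alSuc[of k] k
      by (simp add: ss_S_def mult_left_le)
    ultimately show "t \<in> {0..1}" using al_range[of k] al_range[of "k+1"] k by auto
  qed
  have cS: "continuous_on {0..1} (ss_S a k)" unfolding ss_S_def by (intro continuous_intros)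
  have cg: "continuous_on {0..1} g" unfolding g_def
    by (intro continuous_intros continuous_on_compose2[OF cont cS img] cont cS)
  have cl: "closed {y \<in> {0..1}. g y = 0}"
    by (rule continuous_closed_preimage_constant[OF cg]) simp
  have sub: "{0<..1} \<subseteq> {y \<in> {0..1}. g y = 0}"
    using ident_pos[OF k] by (auto simp: g_def)
  have "closure {0<..(1::real)} \<subseteq> {y \<in> {0..1}. g y = 0}" by (rule closure_minimal[OF sub cl])
  moreover have "closure {0<..(1::real)} = {0..1}" by simp
  ultimately have "g x = 0" using x by auto
  then show ?thesis by (simp add: g_def)
qed


lemma diff_bound: assumes k: "k\<in>{1..n}" and x: "x \<in> {0..1}" and y: "y \<in> {0..1}"
  shows "\<bar>f (ss_S a k x) - f (ss_S a k y)\<bar> \<le> a k * \<bar>f x - f y\<bar> + \<bar>c k\<bar> * (a k * \<bar>x - y\<bar>)"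
proof -
  have ak: "a k > 0" using apos k by auto
  have "f (ss_S a k x) - f (ss_S a k y) = d k * (f x - f y) + c k * (a k * (x - y))"
    using ident[OF k] x y by (simp add: ss_S_def algebra_simps)
  also have "\<bar>\<dots>\<bar> \<le> \<bar>d k\<bar> * \<bar>f x - f y\<bar> + \<bar>c k\<bar> * (a k * \<bar>x - y\<bar>)"
  proof -
    have "\<bar>d k * (f x - f y) + c k * (a k * (x - y))\<bar> \<le> \<bar>d k * (f x - f y)\<bar> + \<bar>c k * (a k * (x - y))\<bar>"
      by (rule abs_triangle_ineq)
    also have "\<dots> = \<bar>d k\<bar> * \<bar>f x - f y\<bar> + \<bar>c k\<bar> * (a k * \<bar>x - y\<bar>)"
      using ak by (simp add: abs_mult)
    finally show ?thesis .
  qed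
  finally show ?thesis using dk[OF k] by simp
qed

lemma partition: assumes "0 < y" "y \<le> 1"
  shows "\<exists>k\<in>{1..n}. ss_alpha a k < y \<and> y \<le> ss_alpha a (k+1)"
proof -
  have "m \<le> n \<Longrightarrow> y \<le> ss_alpha a (m+1) \<Longrightarrow> \<exists>k\<in>{1..m}. ss_alpha a k < y \<and> y \<le> ss_alpha a (k+1)" for m
  proof (induction m)
    case 0 then show ?case using assms al1 by simp
  next
    case (Suc m)
    show ?case
    proof (cases "y \<le> ss_alpha a (m+1)")
      case True then show ?thesis using Suc by force
    next
      case False then show ?thesis using Suc by (intro bexI[of _ "Suc m"]) auto
    qed
  qed
  from this[of n] show ?thesis using aln assms by simp
qed


lemma holder: assumes al: "0 < \<alpha>" "\<alpha> < 1"
  shows "\<exists>C\<ge>0. \<forall>x\<in>{0..1}. \<forall>y\<in>{0..1}. \<bar>f x - f y\<bar> \<le> C * \<bar>x - y\<bar> powr \<alpha>"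
proof -
  have fin: "finite {1..n}" by simp
  have ne: "{1..n} \<noteq> {}" using n2 by auto
  have n1: "1 \<in> {1..n}" "n \<in> {1..n}" using n2 by auto
  define amax where "amax = Max (a ` {1..n})"
  define amin where "amin = Min (a ` {1..n})"
  define M where "M = Max ((\<lambda>k. \<bar>c k\<bar>) ` {1..n})"
  have amax_ge: "\<And>k. k\<in>{1..n} \<Longrightarrow> a k \<le> amax" unfolding amax_def by (rule Max_ge) auto
  have amin_le: "\<And>k. k\<in>{1..n} \<Longrightarrow> amin \<le> a k" unfolding amin_def by (rule Min_le) auto
  have M_ge: "\<And>k. k\<in>{1..n} \<Longrightarrow> \<bar>c k\<bar> \<le> M" unfolding M_def by (rule Max_ge) auto
  have "amin \<in> a ` {1..n}" unfolding amin_def using fin ne by (intro Min_in) auto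
  then have amin_pos: "0 < amin" using apos by auto
  have "amax \<in> a ` {1..n}" unfolding amax_def using fin ne by (intro Max_in) auto
  then obtain k0 where k0: "k0 \<in> {1..n}" "amax = a k0" by auto
  define j0 where "j0 = (if k0 = 1 then 2 else (1::nat))"
  have j0: "j0 \<in> {1..n} - {k0}" using n2 k0 by (auto simp: j0_def)
  have "sum a {1..n} = a k0 + sum a ({1..n} - {k0})" using k0 by (simp add: sum.remove)
  moreover have "a j0 \<le> sum a ({1..n} - {k0})"
    by (rule member_le_sum[OF j0]) (use apos atLeastAtMost_iff in \<open>fastforce+\<close>)
  moreover have "a j0 > 0" using j0 apos by auto
  ultimately have amax_lt1: "amax < 1" using asum k0 by simp
  have amax_pos: "0 < amax" using amin_pos amin_le[OF n1(1)] amax_ge[OF n1(1)] by simp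
  have amin_le1: "amin \<le> 1" using amin_le[OF n1(1)] amax_ge[OF n1(1)] amax_lt1 by simp
  have M0: "0 \<le> M" using M_ge[OF n1(1)] by simp
  have ak1: "\<And>k. k\<in>{1..n} \<Longrightarrow> 0 < a k \<and> a k \<le> 1" using apos amax_ge amax_lt1 by fastforce
  have "bounded (f ` {0..1})" by (rule compact_imp_bounded[OF compact_continuous_image[OF cont compact_Icc]])
  then obtain B where B: "\<forall>x\<in>{0..1}. \<bar>f x\<bar> \<le> B" unfolding bounded_iff by auto
  have B0: "0 \<le> B" using B by force
  have D2B: "\<And>x y. x\<in>{0..1} \<Longrightarrow> y\<in>{0..1} \<Longrightarrow> \<bar>f x - f y\<bar> \<le> 2*B"
    using B by (smt (verit))
  have big: "\<And>C x y. 2*B/amin powr \<alpha> \<le> C \<Longrightarrow> x\<in>{0..1} \<Longrightarrow> y\<in>{0..1} \<Longrightarrow> amin \<le> \<bar>x-y\<bar>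
     \<Longrightarrow> \<bar>f x - f y\<bar> \<le> C * \<bar>x-y\<bar> powr \<alpha>"
  proof -
    fix C x y assume h: "2*B/amin powr \<alpha> \<le> C" "x\<in>{0..1}" "y\<in>{0..1}" "amin \<le> \<bar>x-y\<bar>"
    have p: "0 < amin powr \<alpha>" using amin_pos by simp
    have "0 \<le> 2*B/amin powr \<alpha>" using p B0 by simp
    hence C0: "0 \<le> C" using h(1) by linarith
    have "\<bar>f x - f y\<bar> \<le> 2*B" using D2B h by auto
    also have "\<dots> = (2*B/amin powr \<alpha>) * amin powr \<alpha>" using p by simp
    also have "\<dots> \<le> C * \<bar>x-y\<bar> powr \<alpha>"
      using h p B0 amin_pos al C0 by (intro mult_mono powr_mono2) auto
    finally show "\<bar>f x - f y\<bar> \<le> C * \<bar>x-y\<bar> powr \<alpha>" .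
  qed
  have step: "\<And>k x y C. k\<in>{1..n} \<Longrightarrow> x\<in>{0..1} \<Longrightarrow> y\<in>{0..1} \<Longrightarrow> M / (1 - amax powr (1-\<alpha>)) \<le> C
     \<Longrightarrow> \<bar>f x - f y\<bar> \<le> C * \<bar>x-y\<bar> powr \<alpha>
     \<Longrightarrow> \<bar>f (ss_S a k x) - f (ss_S a k y)\<bar> \<le> C * (a k * \<bar>x - y\<bar>) powr \<alpha>"
  proof -
    fix k x y C assume h: "k\<in>{1..n}" "x\<in>{0..1}" "y\<in>{0..1}" "M / (1 - amax powr (1-\<alpha>)) \<le> C"
      "\<bar>f x - f y\<bar> \<le> C * \<bar>x-y\<bar> powr \<alpha>"
    have ak: "0 < a k" "a k \<le> 1" using ak1 h by auto
    have xy: "\<bar>x - y\<bar> \<le> 1" using h by auto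
    have u1: "a k * \<bar>x - y\<bar> \<le> 1" using ak xy by (simp add: mult_le_one)
    have "\<bar>f (ss_S a k x) - f (ss_S a k y)\<bar> \<le> a k * \<bar>f x - f y\<bar> + \<bar>c k\<bar> * (a k * \<bar>x - y\<bar>)"
      by (rule diff_bound) (use h in auto)
    also have "\<dots> \<le> a k * (C * ((a k * \<bar>x - y\<bar>) / a k) powr \<alpha>) + M * (a k * \<bar>x - y\<bar>)"
      using h ak M_ge[of k] by (intro add_mono mult_left_mono mult_right_mono) auto
    finally have X: "\<bar>f (ss_S a k x) - f (ss_S a k y)\<bar> \<le> a k * (C * ((a k * \<bar>x - y\<bar>) / a k) powr \<alpha>) + M * (a k * \<bar>x - y\<bar>)" .
    show "\<bar>f (ss_S a k x) - f (ss_S a k y)\<bar> \<le> C * (a k * \<bar>x - y\<bar>) powr \<alpha>"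
      by (rule keyineq[OF ak(1) amax_ge[OF h(1)] amax_lt1 al _ u1 M0 h(4) X]) (use ak in simp)
  qed
  define Ce where "Ce = max (2*B/amin powr \<alpha>) (M / (1 - amax powr (1-\<alpha>)))"
  have Ce1: "2*B/amin powr \<alpha> \<le> Ce" and Ce2: "M / (1 - amax powr (1-\<alpha>)) \<le> Ce"
    unfolding Ce_def by auto
  have Ce0: "0 \<le> Ce" using Ce1 B0 amin_pos by (smt (verit) divide_nonneg_pos powr_gt_zero)
  have lowerg: "\<And>m b w. 0 < b \<Longrightarrow> b \<le> amax \<Longrightarrow> amax^(Suc m) \<le> w \<Longrightarrow> amax^m \<le> w/b"
  proof -
    fix m b w assume h: "0 < (b::real)" "b \<le> amax" "amax^(Suc m) \<le> w"
    have "amax^m * b \<le> amax^m * amax" using h amax_pos by (intro mult_left_mono) auto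
    also have "\<dots> \<le> w" using h by (simp add: mult.commute)
    finally show "amax^m \<le> w/b" using h by (simp add: pos_le_divide_eq)
  qed
  have E: "\<forall>u. 0 \<le> u \<and> u \<le> 1 \<and> amax^m \<le> u \<longrightarrow>
     \<bar>f u - f 0\<bar> \<le> Ce * u powr \<alpha> \<and> \<bar>f (1-u) - f 1\<bar> \<le> Ce * u powr \<alpha>" for m
  proof (induction m)
    case 0 show ?case
    proof (intro allI impI)
      fix u assume h: "0 \<le> u \<and> u \<le> 1 \<and> amax^0 \<le> u"
      then have "u = 1" by simp
      then show "\<bar>f u - f 0\<bar> \<le> Ce * u powr \<alpha> \<and> \<bar>f (1-u) - f 1\<bar> \<le> Ce * u powr \<alpha>"
        using big[OF Ce1, of 1 0] big[OF Ce1, of 0 1] amin_le1 by simp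
    qed
  next
    case (Suc m)
    show ?case
    proof (intro allI impI)
      fix u assume h: "0 \<le> u \<and> u \<le> 1 \<and> amax^Suc m \<le> u"
      show "\<bar>f u - f 0\<bar> \<le> Ce * u powr \<alpha> \<and> \<bar>f (1-u) - f 1\<bar> \<le> Ce * u powr \<alpha>"
      proof (cases "amin \<le> u")
        case True then show ?thesis using big[OF Ce1, of u 0] big[OF Ce1, of "1-u" 1] h by auto
      next
        case False
        have a1: "0 < a 1" "a 1 \<le> amax" "amin \<le> a 1" using ak1 amax_ge amin_le n1 by auto
        have an: "0 < a n" "a n \<le> amax" "amin \<le> a n" using ak1 amax_ge amin_le n1 by auto
        have u1: "u / a 1 \<le> 1" "0 \<le> u / a 1" using False a1 h by auto
        have un: "u / a n \<le> 1" "0 \<le> u / a n" using False an h by auto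
        have l1: "amax^m \<le> u / a 1" using lowerg[of "a 1" m u] a1 h by auto
        have ln: "amax^m \<le> u / a n" using lowerg[of "a n" m u] an h by auto
        have I1: "\<bar>f (u / a 1) - f 0\<bar> \<le> Ce * \<bar>u / a 1 - 0\<bar> powr \<alpha>"
          using Suc.IH u1 l1 h a1 by simp
        have In: "\<bar>f (1 - u / a n) - f 1\<bar> \<le> Ce * \<bar>(1 - u / a n) - 1\<bar> powr \<alpha>"
          using Suc.IH un ln h an by simp
        have S1: "\<bar>f (ss_S a 1 (u / a 1)) - f (ss_S a 1 0)\<bar> \<le> Ce * (a 1 * \<bar>u / a 1 - 0\<bar>) powr \<alpha>"
          by (rule step[OF n1(1) _ _ Ce2 I1]) (use u1 in auto)
        have Sn: "\<bar>f (ss_S a n (1 - u / a n)) - f (ss_S a n 1)\<bar> \<le> Ce * (a n * \<bar>(1 - u / a n) - 1\<bar>) powr \<alpha>"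
          by (rule step[OF n1(2) _ _ Ce2 In]) (use un in auto)
        have e1: "ss_S a 1 (u / a 1) = u" "ss_S a 1 0 = 0" using a1 al1 by (auto simp: ss_S_def)
        have an1: "ss_alpha a n + a n = 1" using aln alSuc[of n] n2 by simp
        have en: "ss_S a n (1 - u / a n) = 1 - u" "ss_S a n 1 = 1" unfolding ss_S_def using an an1
          by (simp_all add: right_diff_distrib)
        have "a 1 * \<bar>u / a 1 - 0\<bar> = u" "a n * \<bar>(1 - u / a n) - 1\<bar> = u" using a1 an h by auto
        then show ?thesis using S1 Sn e1 en by simp
      qed
    qed
  qed
  have Eall: "\<And>u. 0 \<le> u \<Longrightarrow> u \<le> 1 \<Longrightarrow>
     \<bar>f u - f 0\<bar> \<le> Ce * u powr \<alpha> \<and> \<bar>f (1-u) - f 1\<bar> \<le> Ce * u powr \<alpha>"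
  proof -
    fix u :: real assume h: "0 \<le> u" "u \<le> 1"
    show "\<bar>f u - f 0\<bar> \<le> Ce * u powr \<alpha> \<and> \<bar>f (1-u) - f 1\<bar> \<le> Ce * u powr \<alpha>"
    proof (cases "u = 0")
      case True then show ?thesis by simp
    next
      case False
      then obtain m where "amax^m < u" using real_arch_pow_inv[of u amax] h amax_lt1 by auto
      then show ?thesis using E[of m] h by auto
    qed
  qed
  have L: "\<And>k u. k\<in>{2..n} \<Longrightarrow> 0 \<le> u \<Longrightarrow> u \<le> a (k-1) \<Longrightarrow>
      \<bar>f (ss_alpha a k - u) - f (ss_alpha a k)\<bar> \<le> Ce * u powr \<alpha>"
  proof -
    fix k u assume h: "k\<in>{2..n}" "0 \<le> u" "u \<le> a (k-1)"
    define j where "j = k - 1"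
    have j: "j \<in> {1..n}" "k = Suc j" using h by (auto simp: j_def)
    have aj: "0 < a j" using ak1 j by auto
    have ak: "ss_alpha a k = ss_alpha a j + a j" using alSuc[of j] j by simp
    have u1: "u / a j \<le> 1" "0 \<le> u / a j" using h aj by (auto simp: j_def)
    have I: "\<bar>f (1 - u / a j) - f 1\<bar> \<le> Ce * \<bar>(1 - u / a j) - 1\<bar> powr \<alpha>"
      using Eall[OF u1(2) u1(1)] h aj by simp
    have S: "\<bar>f (ss_S a j (1 - u / a j)) - f (ss_S a j 1)\<bar> \<le> Ce * (a j * \<bar>(1 - u / a j) - 1\<bar>) powr \<alpha>"
      by (rule step[OF j(1) _ _ Ce2 I]) (use u1 in auto)
    have "ss_S a j (1 - u / a j) = ss_alpha a k - u" "ss_S a j 1 = ss_alpha a k"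
      using aj ak by (auto simp: ss_S_def field_simps)
    moreover have "a j * \<bar>(1 - u / a j) - 1\<bar> = u" using aj h by auto
    ultimately show "\<bar>f (ss_alpha a k - u) - f (ss_alpha a k)\<bar> \<le> Ce * u powr \<alpha>" using S by simp
  qed
  have R: "\<And>k v. k\<in>{1..n} \<Longrightarrow> 0 \<le> v \<Longrightarrow> v \<le> a k \<Longrightarrow>
      \<bar>f (ss_alpha a k + v) - f (ss_alpha a k)\<bar> \<le> Ce * v powr \<alpha>"
  proof -
    fix k v assume h: "k\<in>{1..n}" "0 \<le> v" "v \<le> a k"
    have aj: "0 < a k" using ak1 h by auto
    have u1: "v / a k \<le> 1" "0 \<le> v / a k" using h aj by auto
    have I: "\<bar>f (v / a k) - f 0\<bar> \<le> Ce * \<bar>v / a k - 0\<bar> powr \<alpha>"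
      using Eall[OF u1(2) u1(1)] h aj by simp
    have S: "\<bar>f (ss_S a k (v / a k)) - f (ss_S a k 0)\<bar> \<le> Ce * (a k * \<bar>v / a k - 0\<bar>) powr \<alpha>"
      by (rule step[OF h(1) _ _ Ce2 I]) (use u1 in auto)
    have "ss_S a k (v / a k) = ss_alpha a k + v" "ss_S a k 0 = ss_alpha a k"
      using aj by (auto simp: ss_S_def field_simps)
    moreover have "a k * \<bar>v / a k - 0\<bar> = v" using aj h by auto
    ultimately show "\<bar>f (ss_alpha a k + v) - f (ss_alpha a k)\<bar> \<le> Ce * v powr \<alpha>" using S by simp
  qed
  define Cg where "Cg = 2 * Ce"
  have Cg1: "2*B/amin powr \<alpha> \<le> Cg" and Cg2: "M / (1 - amax powr (1-\<alpha>)) \<le> Cg"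
    using Ce1 Ce2 Ce0 by (auto simp: Cg_def)
  have P: "\<forall>x y. 0 \<le> x \<and> x \<le> y \<and> y \<le> 1 \<and> amax^m \<le> y - x \<longrightarrow>
      \<bar>f y - f x\<bar> \<le> Cg * (y - x) powr \<alpha>" for m
  proof (induction m)
    case 0 show ?case
    proof (intro allI impI)
      fix x y :: real assume h: "0 \<le> x \<and> x \<le> y \<and> y \<le> 1 \<and> amax^0 \<le> y - x"
      then show "\<bar>f y - f x\<bar> \<le> Cg * (y - x) powr \<alpha>"
        using big[OF Cg1, of y x] amin_le1 by simp
    qed
  next
    case (Suc m)
    show ?case
    proof (intro allI impI)
      fix x y :: real assume h: "0 \<le> x \<and> x \<le> y \<and> y \<le> 1 \<and> amax^Suc m \<le> y - x"
      show "\<bar>f y - f x\<bar> \<le> Cg * (y - x) powr \<alpha>"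
      proof (cases "amin \<le> y - x")
        case True then show ?thesis using big[OF Cg1, of y x] h by auto
      next
        case False
        have "0 < amax^Suc m" using amax_pos by simp
        then have y0: "0 < y" using h by linarith
        obtain k where k: "k\<in>{1..n}" "ss_alpha a k < y" "y \<le> ss_alpha a (k+1)"
          using partition[OF y0] h by auto
        have ak: "0 < a k" "a k \<le> amax" "amin \<le> a k" using ak1 amax_ge amin_le k by auto
        have aks: "ss_alpha a (k+1) = ss_alpha a k + a k" using alSuc[of k] k by simp
        show ?thesis
        proof (cases "ss_alpha a k \<le> x")
          case True
          define x' where "x' = (x - ss_alpha a k) / a k"
          define y' where "y' = (y - ss_alpha a k) / a k"
          have xy': "0 \<le> x'" "x' \<le> y'" "y' \<le> 1"
            using True h k ak aks by (auto simp: x'_def y'_def divide_right_mono field_simps)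
          have d': "y' - x' = (y - x) / a k" using ak by (simp add: x'_def y'_def field_simps)
          have "amax^m \<le> y' - x'" using lowerg[of "a k" m "y - x"] ak h d' by simp
          then have I: "\<bar>f y' - f x'\<bar> \<le> Cg * \<bar>y' - x'\<bar> powr \<alpha>" using Suc.IH xy' by auto
          have S: "\<bar>f (ss_S a k y') - f (ss_S a k x')\<bar> \<le> Cg * (a k * \<bar>y' - x'\<bar>) powr \<alpha>"
            by (rule step[OF k(1) _ _ Cg2 I]) (use xy' in auto)
          have "ss_S a k y' = y" "ss_S a k x' = x" using ak
            by (auto simp: ss_S_def x'_def y'_def field_simps)
          moreover have "a k * \<bar>y' - x'\<bar> = y - x" using d' ak xy' h by simp
          ultimately show ?thesis using S by simp
        next
          case False2: False
          have k2: "k \<in> {2..n}" using False2 k h al1 by (cases "k = 1") auto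
          have "k - 1 \<in> {1..n}" using k2 by auto
          then have akm: "amin \<le> a (k-1)" by (rule amin_le)
          define u where "u = ss_alpha a k - x"
          define v where "v = y - ss_alpha a k"
          have uv: "0 \<le> u" "u \<le> y - x" "0 \<le> v" "v \<le> y - x" using False2 k h by (auto simp: u_def v_def)
          have Lu: "\<bar>f (ss_alpha a k - u) - f (ss_alpha a k)\<bar> \<le> Ce * u powr \<alpha>"
            by (rule L[OF k2 uv(1)]) (use uv False akm in linarith)
          have Rv: "\<bar>f (ss_alpha a k + v) - f (ss_alpha a k)\<bar> \<le> Ce * v powr \<alpha>"
            by (rule R[OF k(1) uv(3)]) (use uv False ak in linarith)
          have pu: "u powr \<alpha> \<le> (y - x) powr \<alpha>" "v powr \<alpha> \<le> (y - x) powr \<alpha>"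
            using uv al by (auto intro: powr_mono2)
          have "\<bar>f y - f x\<bar> \<le> Ce * u powr \<alpha> + Ce * v powr \<alpha>"
            using Lu Rv by (simp add: u_def v_def)
          also have "\<dots> \<le> Ce * (y - x) powr \<alpha> + Ce * (y - x) powr \<alpha>"
            using pu Ce0 by (intro add_mono mult_left_mono) auto
          finally show ?thesis by (simp add: Cg_def)
        qed
      qed
    qed
  qed
  have main: "\<And>x y. 0 \<le> x \<Longrightarrow> x \<le> y \<Longrightarrow> y \<le> 1 \<Longrightarrow> \<bar>f y - f x\<bar> \<le> Cg * (y - x) powr \<alpha>"
  proof -
    fix x y :: real assume h: "0 \<le> x" "x \<le> y" "y \<le> 1"
    show "\<bar>f y - f x\<bar> \<le> Cg * (y - x) powr \<alpha>"
    proof (cases "x = y")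
      case True then show ?thesis by simp
    next
      case False
      then obtain m where "amax^m < y - x" using real_arch_pow_inv[of "y - x" amax] h amax_lt1 by auto
      then show ?thesis using P[of m] h by auto
    qed
  qed
  show ?thesis
  proof (intro exI[of _ Cg] conjI ballI)
    show "0 \<le> Cg" using Ce0 by (simp add: Cg_def)
    fix x y :: real assume "x \<in> {0..1}" "y \<in> {0..1}"
    then show "\<bar>f x - f y\<bar> \<le> Cg * \<bar>x - y\<bar> powr \<alpha>"
      using main[of x y] main[of y x] by (cases "x \<le> y") (auto simp: abs_minus_commute)
  qed
qed

end

theorem theorem4:
  fixes n :: nat and a c d \<beta> :: "nat \<Rightarrow> real" and f :: "real \<Rightarrow> real"
  assumes "n \<ge> 2"
    and "\<forall>k\<in>{1..n}. a k > 0"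
    and "(\<Sum>k=1..n. a k) = 1"
    and "\<forall>k\<in>{1..n}. \<bar>d k\<bar> < 1"
    and "continuous_on {0..1} f"
    and "\<forall>t\<in>{0..1}. f t = ss_G n a c d \<beta> f t"
    and "\<forall>i\<in>{1..n}. \<bar>d i\<bar> / a i = 1"
  shows "\<forall>\<alpha>\<in>{0<..<1::real}. \<exists>C\<ge>0. \<forall>x\<in>{0..1}. \<forall>y\<in>{0..1}.
           \<bar>f x - f y\<bar> \<le> C * \<bar>x - y\<bar> powr \<alpha>"
proof
  fix \<alpha> :: real assume "\<alpha> \<in> {0<..<1}"
  interpret ssf n a c d \<beta> f using assms by unfold_locales auto
  show "\<exists>C\<ge>0. \<forall>x\<in>{0..1}. \<forall>y\<in>{0..1}. \<bar>f x - f y\<bar> \<le> C * \<bar>x - y\<bar> powr \<alpha>"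
    using holder \<open>\<alpha> \<in> {0<..<1}\<close> by auto
qed

end
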